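(* Let $\{a_n\}_{n\ge1}$, $\{b_n\}_{n\ge1}$ and $\{\tilde a_n\}_{n\ge1}$ be three non-negative real sequences such that $\sum_{n=1}^\infty a_n=\infty$, $\sum_{n=1}^\infty a_n b_n^p<\infty$, $\lim_{n\to\infty} a_n/\tilde a_n=1$, and $|b_{n+1}-b_n|\le C\,\tilde a_n\, b_n^{p-\epsilon}$ for all $n$, for some positive constants $C$, $p$ and some $\epsilon\in[0,p]$. Then $\lim_{n\to\infty} b_n=0$.
   Context: Here $b_n^{0}$ is interpreted as $1$ (relevant when $\epsilon=p$). *)

theory Defs
  imports Complex_Main
begin

text \<open>Real power x^e for x \<ge> 0 with the paper's convention x^0 = 1 (also for x = 0);
  note that Isabelle's powr has 0 powr 0 = 0.\<close>
definition rpow :: "real \<Rightarrow> real \<Rightarrow> real" where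
  "rpow x e = (if e = 0 then 1 else x powr e)"

end

theory Submission
  imports Defs
begin

lemma rpow_bound:
  fixes x d p e :: real
  assumes "0 < d" "d \<le> x" "0 \<le> e" "e \<le> p" "0 < p"
  shows "rpow x (p - e) \<le> rpow x p / d powr e"
proof -
  have dp: "d powr e > 0" using assms by simp
  have xp: "x > 0" using assms by simp
  have rp: "rpow x p = x powr p" using assms by (simp add: rpow_def)
  show ?thesis
  proof (cases "e = p")
    case True
    have "d powr p \<le> x powr p" using assms by (intro powr_mono2) auto
    then show ?thesis using True dp rp by (simp add: rpow_def)
  next
    case False
    then have "rpow x (p - e) = x powr p / x powr e" by (simp add: rpow_def powr_diff)
    also have "\<dots> \<le> x powr p / d powr e"
      using assms xp dp by (intro divide_left_mono powr_mono2) auto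
    finally show ?thesis using rp by simp
  qed
qed

theorem lemma3p1:
  fixes a b ta :: "nat \<Rightarrow> real" and C p \<epsilon> :: real
  assumes a_nonneg: "\<forall>n\<ge>1. a n \<ge> 0"
      and b_nonneg: "\<forall>n\<ge>1. b n \<ge> 0"
      and ta_nonneg: "\<forall>n\<ge>1. ta n \<ge> 0"
      and a_div: "\<not> summable (\<lambda>n. a (Suc n))"
      and ab_sum: "summable (\<lambda>n. a (Suc n) * rpow (b (Suc n)) p)"
      and ratio: "(\<lambda>n. a n / ta n) \<longlonglongrightarrow> 1"
      and C_pos: "C > 0" and p_pos: "p > 0"
      and eps: "0 \<le> \<epsilon>" "\<epsilon> \<le> p"
      and incr: "\<forall>n\<ge>1. \<bar>b (Suc n) - b n\<bar> \<le> C * ta n * rpow (b n) (p - \<epsilon>)"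
  shows "b \<longlonglongrightarrow> 0"
proof (rule LIMSEQ_I)
  fix e :: real assume e: "e > 0"
  define d where "d = e / 2"
  have d: "d > 0" using e by (simp add: d_def)
  define g where "g j = a j * rpow (b j) p" for j
  have gnn: "g j \<ge> 0" if "j \<ge> 1" for j
    using that a_nonneg b_nonneg by (simp add: g_def rpow_def)
  have gs: "summable g"
    using ab_sum summable_Suc_iff[of g] by (simp add: g_def)
  have small: "\<exists>k\<ge>n. b k < d" for n
  proof (rule ccontr)
    assume "\<not> ?thesis"
    then have big: "\<forall>k\<ge>n. b k \<ge> d" by auto
    have "summable (\<lambda>j. g (Suc j) / d powr p)"
      using gs summable_Suc_iff[of g] by (simp add: summable_divide)
    moreover have "\<forall>\<^sub>F j in sequentially. norm (a (Suc j)) \<le> g (Suc j) / d powr p"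
      using eventually_ge_at_top[of n]
    proof eventually_elim
      case (elim j)
      have b1: "b (Suc j) \<ge> d" using big elim by auto
      have "d powr p \<le> b (Suc j) powr p" using b1 d p_pos by (intro powr_mono2) auto
      then have "a (Suc j) * d powr p \<le> g (Suc j)"
        using a_nonneg p_pos by (simp add: g_def rpow_def mult_left_mono)
      then show ?case using a_nonneg d by (simp add: field_simps)
    qed
    ultimately have "summable (\<lambda>j. a (Suc j))" by (intro summable_comparison_test_ev[of "\<lambda>j. a (Suc j)" "\<lambda>j. g (Suc j) / d powr p"])
    then show False using a_div by simp
  qed
  have "\<forall>\<^sub>F n in sequentially. a n / ta n > 1/2"
    using ratio by (rule order_tendstoD) simp
  then obtain N1 where N1: "\<And>n. n \<ge> N1 \<Longrightarrow> a n / ta n > 1/2"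
    by (auto simp: eventually_sequentially)
  define K where "K = 2 * C / d powr \<epsilon>"
  have K: "K > 0" using C_pos d by (simp add: K_def)
  define \<eta> where "\<eta> = d / K"
  have \<eta>: "\<eta> > 0" using K d by (simp add: \<eta>_def)
  obtain N2 where N2: "\<And>m n. m \<ge> N2 \<Longrightarrow> norm (sum g {m..<n}) < \<eta>"
    using gs \<eta> unfolding summable_Cauchy by blast
  define N where "N = max 1 (max N1 N2)"
  have tbound: "\<bar>b (Suc j) - b j\<bar> \<le> K * g j" if "j \<ge> N" "b j \<ge> d" for j
  proof -
    have j1: "j \<ge> 1" "j \<ge> N1" using that by (auto simp: N_def)
    have tapos: "ta j \<ge> 0" using ta_nonneg j1 by auto
    have h: "a j / ta j > 1/2" using N1 j1 by auto
    then have "ta j \<noteq> 0" by auto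
    with tapos have tp: "ta j > 0" by simp
    have ta2: "ta j \<le> 2 * a j" using h tp by (simp add: field_simps)
    have rb: "rpow (b j) (p - \<epsilon>) \<le> rpow (b j) p / d powr \<epsilon>"
      using rpow_bound[of d "b j" \<epsilon> p] d that eps p_pos by auto
    have r0: "rpow (b j) (p - \<epsilon>) \<ge> 0" by (simp add: rpow_def)
    have "\<bar>b (Suc j) - b j\<bar> \<le> C * ta j * rpow (b j) (p - \<epsilon>)" using incr j1 by auto
    also have "\<dots> \<le> C * (2 * a j) * (rpow (b j) p / d powr \<epsilon>)"
      using ta2 rb r0 C_pos tapos
      by (intro mult_mono mult_left_mono) (auto simp: rpow_def)
    also have "\<dots> = K * g j" by (simp add: K_def g_def)
    finally show ?thesis .
  qed
  show "\<exists>N. \<forall>n\<ge>N. norm (b n - 0) < e"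
  proof (intro exI allI impI)
    fix n assume n: "n \<ge> N"
    show "norm (b n - 0) < e"
    proof (rule ccontr)
      assume "\<not> ?thesis"
      moreover have "b n \<ge> 0" using b_nonneg n by (auto simp: N_def)
      ultimately have bn: "b n \<ge> 2 * d" by (simp add: d_def)
      define k where "k = (LEAST k. k \<ge> n \<and> b k < d)"
      have kP: "k \<ge> n \<and> b k < d" unfolding k_def by (rule LeastI_ex) (use small in blast)
      have kmin: "b j \<ge> d" if "n \<le> j" "j < k" for j
        using not_less_Least[of j "\<lambda>k. k \<ge> n \<and> b k < d"] that by (auto simp: k_def)
      have "b n - b k = (\<Sum>j=n..<k. b j - b (Suc j))"
      proof -
        have "(\<Sum>j=n..<k. b j - b (Suc j)) = - (\<Sum>j=n..<k. b (Suc j) - b j)"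
          by (simp add: sum_negf[symmetric])
        then show ?thesis using kP sum_Suc_diff'[of n k b] by simp
      qed
      also have "\<dots> \<le> (\<Sum>j=n..<k. K * g j)"
      proof (rule sum_mono)
        fix j assume "j \<in> {n..<k}"
        then have "b j - b (Suc j) \<le> \<bar>b (Suc j) - b j\<bar>" "\<bar>b (Suc j) - b j\<bar> \<le> K * g j"
          using tbound kmin n by auto
        then show "b j - b (Suc j) \<le> K * g j" by linarith
      qed
      also have "\<dots> = K * sum g {n..<k}" by (simp add: sum_distrib_left)
      also have "\<dots> < K * \<eta>"
      proof -
        have "norm (sum g {n..<k}) < \<eta>" using N2 n by (auto simp: N_def)
        then have "sum g {n..<k} < \<eta>" by simp
        then show ?thesis using K by simp
      qed
      also have "\<dots> = d" using K by (simp add: \<eta>_def)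
      finally show False using bn kP by linarith
    qed
  qed
qed

end
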